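(* Let $\beta<0,\gamma>0$, $0<\epsilon\le10^{-3}$ and $b>\frac12$. Then $$\big\|D_x^{-\frac12-4\epsilon}\mathcal{F}_x^{-1}\big(\chi_{\{|\xi|\ge a\}}\mathcal{F}_xu\big)\big\|_{L^\infty_{xt}}\le C\|u\|_{X_{0,b}}.$$
   Context: $\phi(\xi)=\beta\xi^3+\frac{\gamma}{\xi}$; $\|u\|_{X_{0,b}}=\big(\int\langle\tau+\phi(\xi)\rangle^{2b}|\mathcal{F}u(\xi,\tau)|^2d\xi d\tau\big)^{1/2}$, $\langle\cdot\rangle=1+|\cdot|$. $D_x^\alpha$ is the Fourier multiplier $|\xi|^\alpha$. $A=\max\{1,|\frac{6\gamma}{7\beta}|^{1/4},|\frac{\gamma}{3\beta}|^{1/2},|\frac{\gamma}{\beta}|,100|\beta|,100|\gamma|\}$, $a=2^{[A]}$. *)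

theory Defs
  imports "HOL-Analysis.Analysis"
begin

definition phi :: "real \<Rightarrow> real \<Rightarrow> real \<Rightarrow> real" where
  "phi beta gamma xi = beta * xi ^ 3 + gamma / xi"

definition bigA :: "real \<Rightarrow> real \<Rightarrow> real" where
  "bigA beta gamma = max 1 (max (\<bar>6 * gamma / (7 * beta)\<bar> powr (1/4))
     (max (\<bar>gamma / (3 * beta)\<bar> powr (1/2)) (max \<bar>gamma / beta\<bar>
     (max (100 * \<bar>beta\<bar>) (100 * \<bar>gamma\<bar>)))))"

definition a_const :: "real \<Rightarrow> real \<Rightarrow> real" where
  "a_const beta gamma = 2 ^ nat \<lfloor>bigA beta gamma\<rfloor>"

definition FT2 :: "(real \<times> real \<Rightarrow> complex) \<Rightarrow> real \<times> real \<Rightarrow> complex" where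
  "FT2 u = (\<lambda>(xi, tau). \<integral>p. exp (- \<i> * complex_of_real (fst p * xi + snd p * tau)) * u p \<partial>lborel)"

definition FTx :: "(real \<times> real \<Rightarrow> complex) \<Rightarrow> real \<times> real \<Rightarrow> complex" where
  "FTx u = (\<lambda>(xi, t). \<integral>x. exp (- \<i> * complex_of_real (x * xi)) * u (x, t) \<partial>lborel)"

definition X_weight :: "real \<Rightarrow> real \<Rightarrow> real \<Rightarrow> (real \<times> real \<Rightarrow> complex) \<Rightarrow> real \<times> real \<Rightarrow> real" where
  "X_weight beta gamma b u = (\<lambda>(xi, tau).
     (1 + \<bar>tau + phi beta gamma xi\<bar>) powr (2 * b) * (cmod (FT2 u (xi, tau)))\<^sup>2)"

definition X0b_norm :: "real \<Rightarrow> real \<Rightarrow> real \<Rightarrow> (real \<times> real \<Rightarrow> complex) \<Rightarrow> real" where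
  "X0b_norm beta gamma b u = sqrt (\<integral>p. X_weight beta gamma b u p \<partial>lborel)"

text \<open>D_x^s F_x^{-1}(chi_{|xi| >= a} F_x u), evaluated at (x,t).\<close>
definition Dx_high :: "real \<Rightarrow> real \<Rightarrow> (real \<times> real \<Rightarrow> complex) \<Rightarrow> real \<times> real \<Rightarrow> complex" where
  "Dx_high s a u = (\<lambda>(x, t). complex_of_real (1 / (2 * pi)) *
     (\<integral>xi. complex_of_real (indicator {xi. \<bar>xi\<bar> \<ge> a} xi * \<bar>xi\<bar> powr s)
        * exp (\<i> * complex_of_real (x * xi)) * FTx u (xi, t) \<partial>lborel))"

end

theory Submission
  imports Defs "HOL-Probability.Characteristic_Functions"
begin


lemma std_normal_char_integral:
  "(\<integral>x. complex_of_real (std_normal_density x) * iexp (t * x) \<partial>lborel) = complex_of_real (exp (- (t^2) / 2))"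
proof -
  have "char std_normal_distribution t = complex_of_real (exp (- (t^2) / 2))"
    by (simp add: char_std_normal_distribution)
  moreover have "char std_normal_distribution t = (\<integral>x. std_normal_density x *\<^sub>R iexp (t * x) \<partial>lborel)"
    unfolding char_def by (subst integral_density) auto
  ultimately show ?thesis by (simp add: scaleR_conv_of_real)
qed

lemma gauss_ft:
  fixes s y :: real assumes s: "s > 0"
  shows "(\<integral>w. iexp (y * w) * complex_of_real (exp (- ((s * w)^2) / 2)) \<partial>lborel)
        = complex_of_real (2 * pi * normal_density 0 s y)"
proof -
  have "(\<integral>w. iexp (y * w) * complex_of_real (exp (- ((s * w)^2) / 2)) \<partial>lborel)
      = \<bar>1/s\<bar> *\<^sub>R (\<integral>x. iexp (y * (0 + 1/s * x)) * complex_of_real (exp (- ((s * (0 + 1/s*x))^2) / 2)) \<partial>lborel)"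
    using s by (intro lborel_integral_real_affine) auto
  also have "(\<lambda>x. iexp (y * (0 + 1/s * x)) * complex_of_real (exp (- ((s * (0 + 1/s*x))^2) / 2)))
     = (\<lambda>x. complex_of_real (sqrt (2*pi)) * (complex_of_real (std_normal_density x) * iexp ((y/s) * x)))"
    using s by (auto simp: std_normal_density_def fun_eq_iff)
  also have "(\<integral>x. complex_of_real (sqrt (2*pi)) * (complex_of_real (std_normal_density x) * iexp ((y/s) * x)) \<partial>lborel)
     = complex_of_real (sqrt (2*pi)) * complex_of_real (exp (- ((y/s)^2) / 2))"
    by (subst integral_mult_right_zero) (simp only: std_normal_char_integral)
  also have "\<bar>1/s\<bar> *\<^sub>R (complex_of_real (sqrt (2*pi)) * complex_of_real (exp (- ((y/s)^2) / 2)))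
     = complex_of_real (1/s * sqrt (2*pi) * exp (- ((y/s)^2) / 2))"
    using s by (simp add: scaleR_conv_of_real)
  also have "1/s * sqrt (2*pi) * exp (- ((y/s)^2) / 2) = 2 * pi * normal_density 0 s y"
  proof -
    have e: "sqrt (2 * pi * s\<^sup>2) = sqrt (2*pi) * s" using s by (simp add: real_sqrt_mult)
    have p: "2 * pi / sqrt (2*pi) = sqrt (2*pi)"
      by (metis pi_gt_zero real_div_sqrt mult_pos_pos zero_less_numeral less_imp_le)
    have "2 * pi * normal_density 0 s y = (2*pi / sqrt (2*pi)) / s * exp (- ((y/s)^2) / 2)"
      using s unfolding normal_density_def e by (simp add: power_divide field_simps)
    then show ?thesis using p by simp
  qed
  finally show ?thesis .
qed
lemma prod_integrable:
  fixes f g :: "real \<Rightarrow> complex"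
  assumes f: "integrable lborel f" and g: "integrable lborel g"
  shows "integrable (lborel \<Otimes>\<^sub>M lborel) (\<lambda>(x,y). f x * g y)"
proof (rule integrableI_bounded)
  have [measurable]: "f \<in> borel_measurable borel" "g \<in> borel_measurable borel"
    using f g by auto
  show "(\<lambda>(x,y). f x * g y) \<in> borel_measurable (lborel \<Otimes>\<^sub>M lborel)" by measurable
  have "(\<integral>\<^sup>+ p. ennreal (norm ((\<lambda>(x,y). f x * g y) p)) \<partial>(lborel \<Otimes>\<^sub>M lborel))
     = (\<integral>\<^sup>+ x. \<integral>\<^sup>+ y. ennreal (norm (f x)) * ennreal (norm (g y)) \<partial>lborel \<partial>lborel)"
    by (subst lborel.nn_integral_fst[symmetric]) (auto simp: norm_mult ennreal_mult)
  also have "\<dots> = (\<integral>\<^sup>+ x. ennreal (norm (f x)) \<partial>lborel) * (\<integral>\<^sup>+ y. ennreal (norm (g y)) \<partial>lborel)"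
    by (simp add: nn_integral_cmult nn_integral_multc)
  also have "\<dots> < \<infinity>"
    using f g unfolding integrable_iff_bounded by (simp add: ennreal_mult_less_top)
  finally show "(\<integral>\<^sup>+ p. ennreal (norm ((\<lambda>(x,y). f x * g y) p)) \<partial>(lborel \<Otimes>\<^sub>M lborel)) < \<infinity>" .
qed

definition ftr :: "(real \<Rightarrow> complex) \<Rightarrow> real \<Rightarrow> complex" where
  "ftr g w = (\<integral>t. exp (- \<i> * complex_of_real (t * w)) * g t \<partial>lborel)"

definition gam :: "real \<Rightarrow> real \<Rightarrow> complex" where
  "gam s w = complex_of_real (exp (- ((s * w)^2) / 2))"

definition Gs :: "(real \<Rightarrow> complex) \<Rightarrow> real \<Rightarrow> real \<Rightarrow> complex" where
  "Gs g s t = complex_of_real (1 / (2 * pi)) * (\<integral>w. iexp (t * w) * gam s w * ftr g w \<partial>lborel)"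

lemma gam_normal: "s > 0 \<Longrightarrow> exp (- ((s * w)^2) / 2) = sqrt (2 * pi) / s * normal_density 0 (1/s) w"
proof -
  assume s: "s > 0"
  have e: "sqrt (2 * pi * (1/s)\<^sup>2) = sqrt (2 * pi) / s" using s by (simp add: real_sqrt_mult real_sqrt_divide power_divide)
  show ?thesis unfolding normal_density_def e using s
    by (simp add: power_mult_distrib power_divide field_simps)
qed

lemma gam_integrable: "s > 0 \<Longrightarrow> integrable lborel (gam s)"
  unfolding gam_def by (subst gam_normal) (auto intro!: integrable_mult_right)

lemma gam_measurable[measurable]: "gam s \<in> borel_measurable borel"
  unfolding gam_def by measurable

lemma norm_gam: "norm (gam s w) \<le> 1"
  unfolding gam_def by simp

lemma norm_gam_mult: "cmod (gam s w) * cmod z \<le> cmod z"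
  by (rule mult_left_le_one_le) (auto simp: norm_gam)

lemma ftr_measurable[measurable]:
  assumes "g \<in> borel_measurable borel" shows "ftr g \<in> borel_measurable borel"
  unfolding ftr_def[abs_def] using assms by measurable

lemma iexp_mult_cancel: "iexp (t * w) * exp (- \<i> * complex_of_real (r * w)) = iexp ((t - r) * w)"
  by (simp add: exp_add[symmetric] algebra_simps)

lemma Gs_conv:
  fixes g :: "real \<Rightarrow> complex"
  assumes gi: "integrable lborel g" and s: "s > 0"
  shows "Gs g s t = (\<integral>r. complex_of_real (normal_density 0 s (t - r)) * g r \<partial>lborel)"
proof -
  have [measurable]: "g \<in> borel_measurable borel" using gi by auto
  define F where "F r w = iexp (t * w) * gam s w * (exp (- \<i> * complex_of_real (r * w)) * g r)" for r w
  have Fm[measurable]: "(\<lambda>(r,w). F r w) \<in> borel_measurable (lborel \<Otimes>\<^sub>M lborel)"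
    unfolding F_def by measurable
  have Fi: "integrable (lborel \<Otimes>\<^sub>M lborel) (\<lambda>(r,w). F r w)"
  proof (rule Bochner_Integration.integrable_bound[OF prod_integrable[OF gi gam_integrable[OF s]]])
    show "(\<lambda>(r,w). F r w) \<in> borel_measurable (lborel \<Otimes>\<^sub>M lborel)" by (rule Fm)
    show "AE p in lborel \<Otimes>\<^sub>M lborel. norm ((\<lambda>(r,w). F r w) p) \<le> norm ((\<lambda>(x,y). g x * gam s y) p)"
      by (auto simp: F_def norm_mult)
  qed
  have "(\<integral>w. iexp (t * w) * gam s w * ftr g w \<partial>lborel) = (\<integral>w. \<integral>r. F r w \<partial>lborel \<partial>lborel)"
    unfolding F_def ftr_def by simp
  also have "\<dots> = (\<integral>r. \<integral>w. F r w \<partial>lborel \<partial>lborel)"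
    by (rule lborel_pair.Fubini_integral[OF Fi])
  also have "\<dots> = (\<integral>r. complex_of_real (2 * pi * normal_density 0 s (t - r)) * g r \<partial>lborel)"
  proof (rule Bochner_Integration.integral_cong[OF refl])
    fix r
    have "(\<integral>w. F r w \<partial>lborel) = (\<integral>w. iexp ((t - r) * w) * complex_of_real (exp (- ((s * w)^2) / 2)) \<partial>lborel) * g r"
      unfolding F_def gam_def
      by (subst integral_mult_left_zero[symmetric]) (rule Bochner_Integration.integral_cong[OF refl], simp add: exp_add[symmetric] algebra_simps)
    then show "(\<integral>w. F r w \<partial>lborel) = complex_of_real (2 * pi * normal_density 0 s (t - r)) * g r"
      using gauss_ft[OF s, of "t - r"] by simp
  qed
  finally show ?thesis unfolding Gs_def
    by (simp add: integral_mult_right_zero[symmetric] mult.assoc[symmetric] del: integral_mult_right_zero)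
qed

definition Ginv :: "(real \<Rightarrow> complex) \<Rightarrow> real \<Rightarrow> complex" where
  "Ginv g t = complex_of_real (1 / (2 * pi)) * (\<integral>w. iexp (t * w) * ftr g w \<partial>lborel)"

lemma normal_density_shift: "normal_density 0 s (t - r) = normal_density r s t"
  by (simp add: normal_density_def power2_commute)

context
  fixes g :: "real \<Rightarrow> complex"
  assumes gi: "integrable lborel g" and hi: "integrable lborel (ftr g)"
begin

lemma g_meas[measurable]: "g \<in> borel_measurable borel"
  using gi by auto

lemma Gs_measurable[measurable]: "Gs g s \<in> borel_measurable borel"
  unfolding Gs_def[abs_def] by measurable

lemma Ginv_measurable[measurable]: "Ginv g \<in> borel_measurable borel"
  unfolding Ginv_def[abs_def] by measurable

lemma Gs_integrand_integrable: "integrable lborel (\<lambda>w. iexp (t * w) * gam s w * ftr g w)"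
  by (rule Bochner_Integration.integrable_bound[OF hi]) (auto simp: norm_mult norm_gam_mult)

lemma Gs_bound: "norm (Gs g s t) \<le> 1 / (2 * pi) * (\<integral>w. norm (ftr g w) \<partial>lborel)"
proof -
  have "norm (\<integral>w. iexp (t * w) * gam s w * ftr g w \<partial>lborel) \<le> (\<integral>w. norm (iexp (t * w) * gam s w * ftr g w) \<partial>lborel)"
    by (rule integral_norm_bound)
  also have "\<dots> \<le> (\<integral>w. norm (ftr g w) \<partial>lborel)"
    using integrable_norm[OF Gs_integrand_integrable] integrable_norm[OF hi]
    by (intro integral_mono) (auto simp: norm_mult norm_gam_mult)
  finally have B: "norm (\<integral>w. iexp (t * w) * gam s w * ftr g w \<partial>lborel) \<le> (\<integral>w. norm (ftr g w) \<partial>lborel)" .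
  have "norm (Gs g s t) = 1 / (2 * pi) * norm (\<integral>w. iexp (t * w) * gam s w * ftr g w \<partial>lborel)"
    unfolding Gs_def norm_mult norm_of_real by simp
  also have "\<dots> \<le> 1 / (2 * pi) * (\<integral>w. norm (ftr g w) \<partial>lborel)"
    using B by (intro mult_left_mono) auto
  finally show ?thesis .
qed

lemma Gs_tendsto: "(\<lambda>n. Gs g (1 / Suc n) t) \<longlonglongrightarrow> Ginv g t"
proof -
  have "(\<lambda>n. \<integral>w. iexp (t * w) * gam (1 / Suc n) w * ftr g w \<partial>lborel) \<longlonglongrightarrow> (\<integral>w. iexp (t * w) * ftr g w \<partial>lborel)"
  proof (rule integral_dominated_convergence[where w = "\<lambda>w. norm (ftr g w)"])
    show "AE w in lborel. (\<lambda>n. iexp (t * w) * gam (1 / Suc n) w * ftr g w) \<longlonglongrightarrow> iexp (t * w) * ftr g w"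
    proof (rule AE_I2)
      fix w
      have "(\<lambda>n. 1 / real (Suc n)) \<longlonglongrightarrow> 0" by (rule LIMSEQ_inverse_real_of_nat[unfolded inverse_eq_divide])
      then have "(\<lambda>n. exp (- ((1 / real (Suc n) * w)^2) / (2::real))) \<longlonglongrightarrow> exp (- ((0 * w)^2) / 2)"
        by (intro tendsto_intros; simp)
      then have "(\<lambda>n. gam (1 / Suc n) w) \<longlonglongrightarrow> complex_of_real (exp (- ((0 * w)^2) / 2))"
        unfolding gam_def by (rule tendsto_of_real)
      then have "(\<lambda>n. gam (1 / Suc n) w) \<longlonglongrightarrow> 1" by simp
      then show "(\<lambda>n. iexp (t * w) * gam (1 / Suc n) w * ftr g w) \<longlonglongrightarrow> iexp (t * w) * ftr g w"
        by (auto intro!: tendsto_eq_intros)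
    qed
    show "\<And>n. AE w in lborel. norm (iexp (t * w) * gam (1 / Suc n) w * ftr g w) \<le> norm (ftr g w)"
      by (auto simp: norm_mult norm_gam_mult)
  qed (use hi in auto)
  then show ?thesis unfolding Gs_def Ginv_def by (intro tendsto_mult_left)
qed


lemma Gs_conv': "s > 0 \<Longrightarrow> Gs g s t = (\<integral>r. complex_of_real (normal_density r s t) * g r \<partial>lborel)"
  using Gs_conv[OF gi] by (simp add: normal_density_shift)

end

definition Pf :: "real set \<Rightarrow> real \<Rightarrow> real \<Rightarrow> real" where
  "Pf I s r = (\<integral>t. indicator I t * normal_density r s t \<partial>lborel)"

lemma nn_integral_normal_density: "s > 0 \<Longrightarrow> (\<integral>\<^sup>+t. ennreal (normal_density r s t) \<partial>lborel) = 1"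
  by (subst nn_integral_eq_integral) auto

lemma Pf_affine:
  assumes s: "s > 0"
  shows "Pf I s r = (\<integral>x. indicator I (r + s * x) * std_normal_density x \<partial>lborel)"
proof -
  have "Pf I s r = \<bar>s\<bar> *\<^sub>R (\<integral>x. indicator I (r + s * x) * normal_density r s (r + s * x) \<partial>lborel)"
    unfolding Pf_def using s lborel_integral_real_affine[where f="\<lambda>t. indicator I t * normal_density r s t" and c = s and t = r] by simp
  also have "\<dots> = (\<integral>x. s * (indicator I (r + s * x) * normal_density r s (r + s * x)) \<partial>lborel)"
    using s by simp
  also have "\<dots> = (\<integral>x. indicator I (r + s * x) * std_normal_density x \<partial>lborel)"
  proof (rule Bochner_Integration.integral_cong[OF refl])
    fix x
    have e: "sqrt (2 * pi * s\<^sup>2) = sqrt (2 * pi) * s" using s by (simp add: real_sqrt_mult)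
    have "s * normal_density r s (r + s * x) = std_normal_density x"
      unfolding normal_density_def e using s by (simp add: power_mult_distrib field_simps)
    then show "s * (indicator I (r + s * x) * normal_density r s (r + s * x)) = indicator I (r + s * x) * std_normal_density x"
      by (metis mult.left_commute)
  qed
  finally show ?thesis .
qed

lemma Pf_bounds:
  assumes I[measurable]: "I \<in> sets borel" and s: "s > 0"
  shows "0 \<le> Pf I s r" "Pf I s r \<le> 1"
proof -
  show "0 \<le> Pf I s r" unfolding Pf_def by (intro integral_nonneg_AE) auto
  have "Pf I s r \<le> (\<integral>t. normal_density r s t \<partial>lborel)"
    unfolding Pf_def
    using s by (intro integral_mono) (auto intro!: Bochner_Integration.integrable_bound[OF integrable_normal_density] simp: indicator_def)
  then show "Pf I s r \<le> 1" using s by simp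
qed

lemma Pf_measurable[measurable]:
  assumes [measurable]: "I \<in> sets borel" shows "Pf I s \<in> borel_measurable borel"
  unfolding Pf_def[abs_def] normal_density_def by measurable

lemma sn_tendsto: "(\<lambda>n. 1 / real (Suc n)) \<longlonglongrightarrow> 0"
  by (rule LIMSEQ_inverse_real_of_nat[unfolded inverse_eq_divide])

lemma Pf_tendsto:
  assumes "r \<noteq> c" "r \<noteq> d"
  shows "(\<lambda>n. Pf {c<..d} (1 / real (Suc n)) r) \<longlonglongrightarrow> indicator {c<..d} r"
proof -
  let ?I = "{c<..d}"
  have "(\<lambda>n. \<integral>x. indicator ?I (r + 1 / real (Suc n) * x) * std_normal_density x \<partial>lborel)
      \<longlonglongrightarrow> (\<integral>x. indicator ?I r * std_normal_density x \<partial>lborel)"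
  proof (rule integral_dominated_convergence[where w = std_normal_density])
    show "AE x in lborel. (\<lambda>n. indicator ?I (r + 1 / real (Suc n) * x) * std_normal_density x)
       \<longlonglongrightarrow> indicator ?I r * std_normal_density x"
    proof (rule AE_I2, rule tendsto_mult[OF _ tendsto_const])
      fix x
      have L: "(\<lambda>n. r + 1 / real (Suc n) * x) \<longlonglongrightarrow> r"
        using tendsto_add[OF tendsto_const tendsto_mult[OF sn_tendsto tendsto_const], of r x] by simp
      show "(\<lambda>n. indicator ?I (r + 1 / real (Suc n) * x) :: real) \<longlonglongrightarrow> indicator ?I r"
      proof (cases "r \<in> ?I")
        case True
        then have "r \<in> {c<..<d}" using assms by auto
        from topological_tendstoD[OF L open_greaterThanLessThan this]
        have "eventually (\<lambda>n. indicator ?I (r + 1 / real (Suc n) * x) = (indicator ?I r :: real)) sequentially"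
          by eventually_elim (use True in \<open>auto simp: indicator_def\<close>)
        then show ?thesis by (rule tendsto_eventually)
      next
        case False
        then have "r \<in> {..<c} \<union> {d<..}" using assms by auto
        from topological_tendstoD[OF L open_Un[OF open_lessThan open_greaterThan] this]
        have "eventually (\<lambda>n. indicator ?I (r + 1 / real (Suc n) * x) = (indicator ?I r :: real)) sequentially"
          by eventually_elim (use False in \<open>auto simp: indicator_def\<close>)
        then show ?thesis by (rule tendsto_eventually)
      qed
    qed
  qed (auto simp: indicator_def)
  then show ?thesis by (simp add: Pf_affine)
qed

context
  fixes g :: "real \<Rightarrow> complex"
  assumes gi: "integrable lborel g" and hi: "integrable lborel (ftr g)"
begin

lemma Gs_interval:
  assumes s: "s > 0"
  shows "(\<integral>t. indicator {c<..d} t *\<^sub>R Gs g s t \<partial>lborel) = (\<integral>r. complex_of_real (Pf {c<..d} s r) * g r \<partial>lborel)"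
proof -
  let ?I = "{c<..d}"
  have [measurable]: "g \<in> borel_measurable borel" using gi by auto
  define K where "K t r = indicator ?I t *\<^sub>R (complex_of_real (normal_density r s t) * g r)" for t r
  have Km[measurable]: "(\<lambda>(t,r). K t r) \<in> borel_measurable (lborel \<Otimes>\<^sub>M lborel)"
    unfolding K_def normal_density_def by measurable
  have Ki: "integrable (lborel \<Otimes>\<^sub>M lborel) (\<lambda>(t,r). K t r)"
  proof (rule integrableI_bounded[OF Km])
    have "(\<integral>\<^sup>+p. ennreal (norm ((\<lambda>(t,r). K t r) p)) \<partial>(lborel \<Otimes>\<^sub>M lborel))
       \<le> (\<integral>\<^sup>+p. ennreal (normal_density (snd p) s (fst p)) * ennreal (norm (g (snd p))) \<partial>(lborel \<Otimes>\<^sub>M lborel))"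
      by (intro nn_integral_mono) (auto simp: K_def norm_mult indicator_def ennreal_mult[symmetric])
    also have "\<dots> = (\<integral>\<^sup>+r. \<integral>\<^sup>+t. ennreal (normal_density r s t) * ennreal (norm (g r)) \<partial>lborel \<partial>lborel)"
      by (subst lborel_pair.nn_integral_snd[symmetric]) (auto simp: normal_density_def)
    also have "\<dots> = (\<integral>\<^sup>+r. ennreal (norm (g r)) \<partial>lborel)"
      using s by (simp add: nn_integral_multc nn_integral_normal_density)
    also have "\<dots> < \<infinity>" using gi unfolding integrable_iff_bounded by simp
    finally show "(\<integral>\<^sup>+p. ennreal (norm ((\<lambda>(t,r). K t r) p)) \<partial>(lborel \<Otimes>\<^sub>M lborel)) < \<infinity>" .
  qed
  have "(\<integral>t. indicator ?I t *\<^sub>R Gs g s t \<partial>lborel) = (\<integral>t. \<integral>r. K t r \<partial>lborel \<partial>lborel)"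
    unfolding K_def Gs_conv'[OF gi hi s] by simp
  also have "\<dots> = (\<integral>r. \<integral>t. K t r \<partial>lborel \<partial>lborel)"
    by (rule lborel_pair.Fubini_integral[OF Ki, symmetric])
  also have "\<dots> = (\<integral>r. complex_of_real (Pf ?I s r) * g r \<partial>lborel)"
  proof (rule Bochner_Integration.integral_cong[OF refl])
    fix r
    have "(\<integral>t. K t r \<partial>lborel) = (\<integral>t. complex_of_real (indicator ?I t * normal_density r s t) * g r \<partial>lborel)"
      unfolding K_def by (rule Bochner_Integration.integral_cong[OF refl]) (simp add: scaleR_conv_of_real)
    also have "\<dots> = complex_of_real (Pf ?I s r) * g r"
      unfolding Pf_def by (simp only: integral_mult_left_zero integral_complex_of_real)
    finally show "(\<integral>t. K t r \<partial>lborel) = complex_of_real (Pf ?I s r) * g r" .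
  qed
  finally show ?thesis .
qed

lemma interval_eq:
  "(\<integral>t. indicator {c<..d} t *\<^sub>R g t \<partial>lborel) = (\<integral>t. indicator {c<..d} t *\<^sub>R Ginv g t \<partial>lborel)"
proof (rule LIMSEQ_unique)
  let ?I = "{c<..d}"
  define B where "B = 1 / (2 * pi) * (\<integral>w. norm (ftr g w) \<partial>lborel)"
  have Ifin: "emeasure lborel ?I < \<infinity>"
    by (rule emeasure_bounded_finite) (rule bounded_subset[OF bounded_closed_interval[of c d]], auto)
  let ?A = "\<lambda>n. (\<integral>t. indicator ?I t *\<^sub>R Gs g (1 / real (Suc n)) t \<partial>lborel)"
  show "?A \<longlonglongrightarrow> (\<integral>t. indicator ?I t *\<^sub>R Ginv g t \<partial>lborel)"
  proof (rule integral_dominated_convergence[where w = "\<lambda>t. indicator ?I t *\<^sub>R B"])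
    show "AE t in lborel. (\<lambda>n. indicator ?I t *\<^sub>R Gs g (1 / real (Suc n)) t) \<longlonglongrightarrow> indicator ?I t *\<^sub>R Ginv g t"
      by (intro AE_I2 tendsto_scaleR tendsto_const) (use Gs_tendsto[OF gi hi] in simp)
    show "\<And>n. AE t in lborel. norm (indicator ?I t *\<^sub>R Gs g (1 / real (Suc n)) t)
       \<le> indicator ?I t *\<^sub>R B"
      using Gs_bound[OF gi hi] unfolding B_def by (auto simp: indicator_def)
    show "integrable lborel (\<lambda>t. indicator ?I t *\<^sub>R B)"
      using Ifin by (intro integrable_indicator) auto
  qed (use gi hi in auto)
  have "?A = (\<lambda>n. \<integral>r. complex_of_real (Pf ?I (1 / real (Suc n)) r) * g r \<partial>lborel)"
    by (intro ext Gs_interval) simp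
  also have "\<dots> \<longlonglongrightarrow> (\<integral>t. indicator ?I t *\<^sub>R g t \<partial>lborel)"
  proof (rule integral_dominated_convergence[where w = "\<lambda>r. norm (g r)"])
    have "AE r in lborel. r \<noteq> c" "AE r in lborel. r \<noteq> d" by (rule AE_lborel_singleton)+
    then show "AE r in lborel. (\<lambda>n. complex_of_real (Pf ?I (1 / real (Suc n)) r) * g r) \<longlonglongrightarrow> indicator ?I r *\<^sub>R g r"
    proof eventually_elim
      case (elim r)
      show ?case unfolding scaleR_conv_of_real
        by (intro tendsto_mult tendsto_of_real Pf_tendsto elim tendsto_const)
    qed
    show "\<And>n. AE r in lborel. norm (complex_of_real (Pf ?I (1 / real (Suc n)) r) * g r) \<le> norm (g r)"
      using Pf_bounds by (auto simp: norm_mult intro!: mult_left_le_one_le)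
  qed (use gi in auto)
  finally show "?A \<longlonglongrightarrow> (\<integral>t. indicator ?I t *\<^sub>R g t \<partial>lborel)" .
qed

end

lemma real_ae_zero:
  fixes \<psi> :: "real \<Rightarrow> real"
  assumes \<psi>i: "integrable lborel \<psi>"
    and supp: "\<And>t. R < t \<Longrightarrow> \<psi> t = 0"
    and int0: "\<And>c d. (\<integral>t. indicator {c<..d} t * \<psi> t \<partial>lborel) = 0"
  shows "AE t in lborel. \<psi> t = 0"
proof -
  have [measurable]: "\<psi> \<in> borel_measurable borel" using \<psi>i by auto
  let ?P = "\<lambda>t. ennreal (\<psi> t)" and ?Q = "\<lambda>t. ennreal (- \<psi> t)"
  have Pfin: "(\<integral>\<^sup>+t. ?P t \<partial>lborel) < \<infinity>"
  proof -
    have "(\<integral>\<^sup>+t. ?P t \<partial>lborel) \<le> (\<integral>\<^sup>+t. ennreal (norm (\<psi> t)) \<partial>lborel)"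
      by (intro nn_integral_mono) (auto intro: ennreal_leI)
    also have "\<dots> < \<infinity>" using \<psi>i unfolding integrable_iff_bounded by simp
    finally show ?thesis .
  qed
  have key: "emeasure (density lborel ?P) {x<..} = ennreal (\<integral>t. max 0 (\<psi> t) * indicator {x<..} t \<partial>lborel)"
    and keyQ: "emeasure (density lborel ?Q) {x<..} = ennreal (\<integral>t. max 0 (- \<psi> t) * indicator {x<..} t \<partial>lborel)" for x
  proof -
    have i1: "integrable lborel (\<lambda>t. max 0 (\<psi> t) * indicator {x<..} t)"
      by (rule Bochner_Integration.integrable_bound[OF \<psi>i]) (auto simp: indicator_def)
    have i2: "integrable lborel (\<lambda>t. max 0 (- \<psi> t) * indicator {x<..} t)"
      by (rule Bochner_Integration.integrable_bound[OF \<psi>i]) (auto simp: indicator_def)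
    have "emeasure (density lborel ?P) {x<..} = (\<integral>\<^sup>+t. ennreal (max 0 (\<psi> t) * indicator {x<..} t) \<partial>lborel)"
      by (subst emeasure_density) (auto intro!: nn_integral_cong simp: indicator_def ennreal_neg max_def)
    also have "\<dots> = ennreal (\<integral>t. max 0 (\<psi> t) * indicator {x<..} t \<partial>lborel)"
      using i1 by (intro nn_integral_eq_integral) auto
    finally show "emeasure (density lborel ?P) {x<..} = ennreal (\<integral>t. max 0 (\<psi> t) * indicator {x<..} t \<partial>lborel)" .
    have "emeasure (density lborel ?Q) {x<..} = (\<integral>\<^sup>+t. ennreal (max 0 (- \<psi> t) * indicator {x<..} t) \<partial>lborel)"
      by (subst emeasure_density) (auto intro!: nn_integral_cong simp: indicator_def ennreal_neg max_def)
    also have "\<dots> = ennreal (\<integral>t. max 0 (- \<psi> t) * indicator {x<..} t \<partial>lborel)"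
      using i2 by (intro nn_integral_eq_integral) auto
    finally show "emeasure (density lborel ?Q) {x<..} = ennreal (\<integral>t. max 0 (- \<psi> t) * indicator {x<..} t \<partial>lborel)" .
  qed
  have eqM: "density lborel ?P = density lborel ?Q"
  proof (rule measure_eqI_lessThan)
    show "sets (density lborel ?P) = sets borel" "sets (density lborel ?Q) = sets borel" by simp_all
    fix x
    show "emeasure (density lborel ?P) {x<..} < \<infinity>"
      unfolding key by simp
    have i1: "integrable lborel (\<lambda>t. max 0 (\<psi> t) * indicator {x<..} t)"
      by (rule Bochner_Integration.integrable_bound[OF \<psi>i]) (auto simp: indicator_def)
    have i2: "integrable lborel (\<lambda>t. max 0 (- \<psi> t) * indicator {x<..} t)"
      by (rule Bochner_Integration.integrable_bound[OF \<psi>i]) (auto simp: indicator_def)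
    have "(\<integral>t. max 0 (\<psi> t) * indicator {x<..} t \<partial>lborel) - (\<integral>t. max 0 (- \<psi> t) * indicator {x<..} t \<partial>lborel)
        = (\<integral>t. indicator {x<..max x R} t * \<psi> t \<partial>lborel)"
      unfolding Bochner_Integration.integral_diff[OF i1 i2, symmetric]
    proof (rule Bochner_Integration.integral_cong[OF refl])
      fix t
      show "max 0 (\<psi> t) * indicator {x<..} t - max 0 (- \<psi> t) * indicator {x<..} t = indicator {x<..max x R} t * \<psi> t"
        using supp[of t] by (auto simp: indicator_def max_def)
    qed
    then have "(\<integral>t. max 0 (\<psi> t) * indicator {x<..} t \<partial>lborel) = (\<integral>t. max 0 (- \<psi> t) * indicator {x<..} t \<partial>lborel)"
      using int0 by simp
    then show "emeasure (density lborel ?P) {x<..} = emeasure (density lborel ?Q) {x<..}"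
      unfolding key keyQ by simp
  qed
  have "AE t in lborel. ?P t = ?Q t"
    using finite_density_unique[of ?P lborel ?Q] eqM Pfin by auto
  then show ?thesis
  proof eventually_elim
    case (elim t) then show ?case
      by (cases "\<psi> t > 0"; cases "\<psi> t < 0") (auto simp: ennreal_neg)
  qed
qed

lemma complex_ae_zero:
  fixes f :: "real \<Rightarrow> complex"
  assumes fi: "integrable lborel f"
    and supp: "\<And>t. R < t \<Longrightarrow> f t = 0"
    and int0: "\<And>c d. (\<integral>t. indicator {c<..d} t *\<^sub>R f t \<partial>lborel) = 0"
  shows "AE t in lborel. f t = 0"
proof -
  have "AE t in lborel. Re (f t) = 0"
  proof (rule real_ae_zero[where R = R])
    show "integrable lborel (\<lambda>t. Re (f t))" using fi by auto
    show "Re (f t) = 0" if "R < t" for t using supp[OF that] by simp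
    fix c d
    have "Re (\<integral>t. indicator {c<..d} t *\<^sub>R f t \<partial>lborel) = (\<integral>t. Re (indicator {c<..d} t *\<^sub>R f t) \<partial>lborel)"
      by (rule integral_Re[OF integrable_mult_indicator[OF _ fi], symmetric]) simp
    then have "(\<integral>t. indicator {c<..d} t * Re (f t) \<partial>lborel) = Re (\<integral>t. indicator {c<..d} t *\<^sub>R f t \<partial>lborel)"
      by simp
    then show "(\<integral>t. indicator {c<..d} t * Re (f t) \<partial>lborel) = 0" using int0 by simp
  qed
  moreover have "AE t in lborel. Im (f t) = 0"
  proof (rule real_ae_zero[where R = R])
    show "integrable lborel (\<lambda>t. Im (f t))" using fi by auto
    show "Im (f t) = 0" if "R < t" for t using supp[OF that] by simp
    fix c d
    have "Im (\<integral>t. indicator {c<..d} t *\<^sub>R f t \<partial>lborel) = (\<integral>t. Im (indicator {c<..d} t *\<^sub>R f t) \<partial>lborel)"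
      by (rule integral_Im[OF integrable_mult_indicator[OF _ fi], symmetric]) simp
    then have "(\<integral>t. indicator {c<..d} t * Im (f t) \<partial>lborel) = Im (\<integral>t. indicator {c<..d} t *\<^sub>R f t \<partial>lborel)"
      by simp
    then show "(\<integral>t. indicator {c<..d} t * Im (f t) \<partial>lborel) = 0" using int0 by simp
  qed
  ultimately show ?thesis by eventually_elim (simp add: complex_eq_iff)
qed

context
  fixes g :: "real \<Rightarrow> complex"
  assumes gi: "integrable lborel g" and hi: "integrable lborel (ftr g)"
begin

lemma Ginv_bound: "norm (Ginv g t) \<le> 1 / (2 * pi) * (\<integral>w. norm (ftr g w) \<partial>lborel)"
proof -
  have "norm (\<integral>w. iexp (t * w) * ftr g w \<partial>lborel) \<le> (\<integral>w. norm (iexp (t * w) * ftr g w) \<partial>lborel)"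
    by (rule integral_norm_bound)
  also have "\<dots> = (\<integral>w. norm (ftr g w) \<partial>lborel)"
    by (simp add: norm_mult)
  finally have B: "norm (\<integral>w. iexp (t * w) * ftr g w \<partial>lborel) \<le> (\<integral>w. norm (ftr g w) \<partial>lborel)" .
  have "norm (Ginv g t) = 1 / (2 * pi) * norm (\<integral>w. iexp (t * w) * ftr g w \<partial>lborel)"
    unfolding Ginv_def norm_mult norm_of_real by simp
  also have "\<dots> \<le> 1 / (2 * pi) * (\<integral>w. norm (ftr g w) \<partial>lborel)"
    using B by (intro mult_left_mono) auto
  finally show ?thesis .
qed

lemma Ginv_interval_integrable: "integrable lborel (\<lambda>t. indicator {c<..d} t *\<^sub>R Ginv g t)"
proof (rule integrableI_bounded_set_indicator)
  show "emeasure lborel {c<..d} < \<infinity>"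
    by (rule emeasure_bounded_finite) (rule bounded_subset[OF bounded_closed_interval[of c d]], auto)
  show "AE t in lborel. t \<in> {c<..d} \<longrightarrow> norm (Ginv g t) \<le> 1 / (2 * pi) * (\<integral>w. norm (ftr g w) \<partial>lborel)"
    using Ginv_bound by auto
qed (use gi hi in auto)

theorem fourier_inversion: "AE t in lborel. g t = Ginv g t"
proof -
  have H: "AE t in lborel. indicator {- real n<..real n} t *\<^sub>R (g t - Ginv g t) = 0" for n :: nat
  proof (rule complex_ae_zero[where R = "real n"])
    show "integrable lborel (\<lambda>t. indicator {- real n<..real n} t *\<^sub>R (g t - Ginv g t))"
      unfolding scaleR_diff_right
      by (intro Bochner_Integration.integrable_diff integrable_mult_indicator gi Ginv_interval_integrable) auto
    show "indicator {- real n<..real n} t *\<^sub>R (g t - Ginv g t) = 0" if "real n < t" for t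
      using that by auto
    fix c d
    let ?a = "max c (- real n)" and ?b = "min d (real n)"
    have "(\<integral>t. indicator {c<..d} t *\<^sub>R (indicator {- real n<..real n} t *\<^sub>R (g t - Ginv g t)) \<partial>lborel)
       = (\<integral>t. indicator {?a<..?b} t *\<^sub>R g t - indicator {?a<..?b} t *\<^sub>R Ginv g t \<partial>lborel)"
      by (rule Bochner_Integration.integral_cong[OF refl]) (auto simp: indicator_def algebra_simps)
    also have "\<dots> = (\<integral>t. indicator {?a<..?b} t *\<^sub>R g t \<partial>lborel) - (\<integral>t. indicator {?a<..?b} t *\<^sub>R Ginv g t \<partial>lborel)"
      by (intro Bochner_Integration.integral_diff integrable_mult_indicator gi Ginv_interval_integrable) auto
    also have "\<dots> = 0" using interval_eq[OF gi hi] by simp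
    finally show "(\<integral>t. indicator {c<..d} t *\<^sub>R (indicator {- real n<..real n} t *\<^sub>R (g t - Ginv g t)) \<partial>lborel) = 0" .
  qed
  have "AE t in lborel. \<forall>n::nat. indicator {- real n<..real n} t *\<^sub>R (g t - Ginv g t) = 0"
    by (rule AE_all_countable[THEN iffD2]) (intro allI H)
  then show ?thesis
  proof eventually_elim
    case (elim t)
    obtain n :: nat where "\<bar>t\<bar> < real n" using reals_Archimedean2 by blast
    with elim[rule_format, of n] show ?case by (auto simp: indicator_def)
  qed
qed

end



lemma tail_nn:
  assumes e: "e < -1" and c: "c > 0"
  shows "(\<integral>\<^sup>+x. ennreal (x powr e) * indicator {c..} x \<partial>lborel) = ennreal (- (c powr (e+1)) / (e+1))"
  by (rule nn_integral_has_integral_lebesgue'[OF _ has_integral_powr_to_inf[OF e c]]) simp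

lemma two_tail_fin:
  assumes e: "e < -1" and c: "c > 0"
  shows "(\<integral>\<^sup>+x. ennreal (\<bar>x\<bar> powr e) * indicator {x. c \<le> \<bar>x\<bar>} x \<partial>lborel) < \<infinity>"
proof -
  have "(\<integral>\<^sup>+x. ennreal (\<bar>x\<bar> powr e) * indicator {x. c \<le> \<bar>x\<bar>} x \<partial>lborel)
     \<le> (\<integral>\<^sup>+x. ennreal (x powr e) * indicator {c..} x + ennreal ((-x) powr e) * indicator {c..} (-x) \<partial>lborel)"
    using c by (intro nn_integral_mono) (auto simp: indicator_def)
  also have "\<dots> = (\<integral>\<^sup>+x. ennreal (x powr e) * indicator {c..} x \<partial>lborel) + (\<integral>\<^sup>+x. ennreal ((-x) powr e) * indicator {c..} (-x) \<partial>lborel)"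
    by (rule nn_integral_add) auto
  also have "(\<integral>\<^sup>+x. ennreal ((-x) powr e) * indicator {c..} (-x) \<partial>lborel) = (\<integral>\<^sup>+x. ennreal (x powr e) * indicator {c..} x \<partial>lborel)"
    using nn_integral_real_affine[where f = "\<lambda>x. ennreal (x powr e) * indicator {c..} x" and c = "-1" and t = 0] by simp
  finally have X: "(\<integral>\<^sup>+x. ennreal (\<bar>x\<bar> powr e) * indicator {x. c \<le> \<bar>x\<bar>} x \<partial>lborel)
     \<le> ennreal (- (c powr (e+1)) / (e+1)) + ennreal (- (c powr (e+1)) / (e+1))"
    using tail_nn[OF e c] by simp
  have "ennreal (- (c powr (e+1)) / (e+1)) + ennreal (- (c powr (e+1)) / (e+1)) < \<infinity>"
    by (simp add: less_top[symmetric])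
  with X show ?thesis by (rule order.strict_trans1)
qed



context
  fixes u :: "real \<times> real \<Rightarrow> complex"
  assumes ui: "integrable lborel u"
begin

lemma ui2: "integrable (lborel \<Otimes>\<^sub>M lborel) u"
  using ui by (simp add: lborel_prod)

lemma u_meas_l: "u \<in> borel_measurable (lborel \<Otimes>\<^sub>M lborel)"
  using ui2 by auto

lemma u_meas[measurable]: "u \<in> borel_measurable borel"
  using ui by auto

lemma FTx_eq: "FTx u = (\<lambda>p. \<integral>x. exp (- \<i> * complex_of_real (x * fst p)) * u (x, snd p) \<partial>lborel)"
  by (auto simp: FTx_def fun_eq_iff)

lemma FTx_meas[measurable]: "FTx u \<in> borel_measurable (borel \<Otimes>\<^sub>M borel)"
  unfolding FTx_eq by measurable

lemma FTx_slice_meas[measurable]: "(\<lambda>t. FTx u (xi, t)) \<in> borel_measurable borel"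
  by measurable

lemma FTx_slice_integrable: "integrable lborel (\<lambda>t. FTx u (xi, t))"
proof -
  have "integrable (lborel \<Otimes>\<^sub>M lborel) (\<lambda>(x, t). norm (u (x, t)))"
    using integrable_norm[OF ui2] by (simp add: case_prod_beta')
  then have U: "integrable lborel (\<lambda>t. \<integral>x. norm (u (x, t)) \<partial>lborel)"
    by (rule lborel_pair.integrable_snd)
  show ?thesis
  proof (rule Bochner_Integration.integrable_bound[OF U])
    show "(\<lambda>t. FTx u (xi, t)) \<in> borel_measurable lborel" by simp
    show "AE t in lborel. norm (FTx u (xi, t)) \<le> norm (\<integral>x. norm (u (x, t)) \<partial>lborel)"
    proof (rule AE_I2)
      fix t
      have "norm (FTx u (xi, t)) \<le> (\<integral>x. norm (exp (- \<i> * complex_of_real (x * xi)) * u (x, t)) \<partial>lborel)"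
        unfolding FTx_def by (simp add: integral_norm_bound)
      also have "\<dots> = (\<integral>x. norm (u (x, t)) \<partial>lborel)"
        by (simp add: norm_mult)
      also have "\<dots> \<le> norm (\<integral>x. norm (u (x, t)) \<partial>lborel)" by simp
      finally show "norm (FTx u (xi, t)) \<le> norm (\<integral>x. norm (u (x, t)) \<partial>lborel)" .
    qed
  qed
qed

lemma ftr_FTx: "ftr (\<lambda>t. FTx u (xi, t)) tau = FT2 u (xi, tau)"
proof -
  define f where "f x t = exp (- \<i> * complex_of_real (x * xi + t * tau)) * u (x, t)" for x t
  have fi: "integrable (lborel \<Otimes>\<^sub>M lborel) (case_prod f)"
  proof (rule Bochner_Integration.integrable_bound[OF ui2])
    show "case_prod f \<in> borel_measurable (lborel \<Otimes>\<^sub>M lborel)" unfolding f_def using u_meas_l by measurable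
    show "AE p in lborel \<Otimes>\<^sub>M lborel. norm (case_prod f p) \<le> norm (u p)"
      by (auto simp: f_def norm_mult)
  qed
  have "ftr (\<lambda>t. FTx u (xi, t)) tau = (\<integral>t. \<integral>x. f x t \<partial>lborel \<partial>lborel)"
    unfolding ftr_def
  proof (rule Bochner_Integration.integral_cong[OF refl])
    fix t
    have e: "exp (- \<i> * complex_of_real (t * tau)) * (exp (- \<i> * complex_of_real (x * xi)) * u (x, t)) = f x t" for x
    proof -
      have "exp (- \<i> * complex_of_real (t * tau)) * exp (- \<i> * complex_of_real (x * xi))
          = exp (- \<i> * complex_of_real (t * tau) + - \<i> * complex_of_real (x * xi))"
        by (rule exp_add[symmetric])
      also have "- \<i> * complex_of_real (t * tau) + - \<i> * complex_of_real (x * xi) = - \<i> * complex_of_real (x * xi + t * tau)"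
        by (simp add: algebra_simps)
      finally show ?thesis unfolding f_def by (simp add: mult.assoc[symmetric])
    qed
    have F: "FTx u (xi, t) = (\<integral>x. exp (- \<i> * complex_of_real (x * xi)) * u (x, t) \<partial>lborel)"
      by (simp add: FTx_def)
    show "exp (- \<i> * complex_of_real (t * tau)) * FTx u (xi, t) = (\<integral>x. f x t \<partial>lborel)"
      unfolding e[symmetric] F by (rule integral_mult_right_zero[symmetric])
  qed
  also have "\<dots> = integral\<^sup>L (lborel \<Otimes>\<^sub>M lborel) (case_prod f)"
    by (rule lborel_pair.integral_snd[OF fi])
  also have "\<dots> = FT2 u (xi, tau)"
    unfolding FT2_def f_def lborel_prod by (simp add: case_prod_beta')
  finally show ?thesis .
qed


lemma FTx_inversion:
  assumes Fi: "integrable lborel (FT2 u)"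
  shows "AE t in lborel. AE xi in lborel. FTx u (xi, t) =
     complex_of_real (1 / (2 * pi)) * (\<integral>w. iexp (t * w) * FT2 u (xi, w) \<partial>lborel)"
proof -
  have Fi2: "integrable (lborel \<Otimes>\<^sub>M lborel) (FT2 u)" using Fi by (simp add: lborel_prod)
  have [measurable]: "FT2 u \<in> borel_measurable borel" using Fi by auto
  have AEx: "AE xi in lborel. AE t in lborel. FTx u (xi, t) =
     complex_of_real (1 / (2 * pi)) * (\<integral>w. iexp (t * w) * FT2 u (xi, w) \<partial>lborel)"
    using lborel_pair.AE_integrable_fst'[OF Fi2]
  proof eventually_elim
    case (elim xi)
    have h: "ftr (\<lambda>t. FTx u (xi, t)) = (\<lambda>w. FT2 u (xi, w))"
      by (rule ext) (rule ftr_FTx)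
    have "AE t in lborel. FTx u (xi, t) = Ginv (\<lambda>t. FTx u (xi, t)) t"
      by (rule fourier_inversion) (use FTx_slice_integrable elim h in auto)
    then show ?case by (simp add: Ginv_def h)
  qed
  have S: "sets (lborel \<Otimes>\<^sub>M lborel) = sets ((borel::real measure) \<Otimes>\<^sub>M (borel::real measure))"
    by (rule sets_pair_measure_cong) simp_all
  have "{p \<in> space ((borel::real measure) \<Otimes>\<^sub>M (borel::real measure)). FTx u (fst p, snd p) =
     complex_of_real (1 / (2 * pi)) * (\<integral>w. iexp (snd p * w) * FT2 u (fst p, w) \<partial>lborel)} \<in> sets (borel \<Otimes>\<^sub>M borel)"
    by measurable
  then have "{p \<in> space (lborel \<Otimes>\<^sub>M lborel). FTx u (fst p, snd p) =
     complex_of_real (1 / (2 * pi)) * (\<integral>w. iexp (snd p * w) * FT2 u (fst p, w) \<partial>lborel)} \<in> sets (lborel \<Otimes>\<^sub>M lborel)"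
    unfolding S by (simp add: space_pair_measure)
  from lborel_pair.AE_commute[OF this] AEx show ?thesis by simp
qed

end



lemma T_fin:
  assumes p: "p > 1"
  shows "(\<integral>\<^sup>+w. ennreal ((1 + \<bar>w\<bar>) powr (- p)) \<partial>lborel) < \<infinity>"
proof -
  have "(\<integral>\<^sup>+w. ennreal ((1 + \<bar>w\<bar>) powr (- p)) \<partial>lborel)
     \<le> (\<integral>\<^sup>+w. indicator {-1..1} w + ennreal (\<bar>w\<bar> powr (- p)) * indicator {x. 1 \<le> \<bar>x\<bar>} w \<partial>lborel)"
  proof (intro nn_integral_mono)
    fix w :: real
    show "ennreal ((1 + \<bar>w\<bar>) powr (- p)) \<le> indicator {-1..1} w + ennreal (\<bar>w\<bar> powr (- p)) * indicator {x. 1 \<le> \<bar>x\<bar>} w"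
    proof (cases "1 \<le> \<bar>w\<bar>")
      case True
      have "(1 + \<bar>w\<bar>) powr (- p) \<le> \<bar>w\<bar> powr (- p)"
        using True p by (intro powr_mono2') auto
      then show ?thesis using True by (auto simp: indicator_def intro: ennreal_leI order_trans)
    next
      case False
      have o: "1 \<le> (1 + \<bar>w\<bar>) powr p" by (rule ge_one_powr_ge_zero) (use p in auto)
      have "(1 + \<bar>w\<bar>) powr (- p) \<le> 1"
        using o by (simp add: powr_minus inverse_le_1_iff)
      then show ?thesis using False by (auto simp: indicator_def intro: ennreal_leI)
    qed
  qed
  also have "\<dots> = emeasure lborel {-1..1::real} + (\<integral>\<^sup>+w. ennreal (\<bar>w\<bar> powr (- p)) * indicator {x. 1 \<le> \<bar>x\<bar>} w \<partial>lborel)"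
    by (subst nn_integral_add) auto
  also have "\<dots> < \<infinity>"
    using two_tail_fin[of "- p" 1] p by (simp add: less_top[symmetric])
  finally show ?thesis .
qed

lemma T_shift:
  "(\<integral>\<^sup>+w. ennreal ((1 + \<bar>w + c\<bar>) powr (- p)) \<partial>lborel) = (\<integral>\<^sup>+w. ennreal ((1 + \<bar>w\<bar>) powr (- p)) \<partial>lborel)"
  using nn_integral_real_affine[where f = "\<lambda>w. ennreal ((1 + \<bar>w\<bar>) powr (- p))" and c = 1 and t = c]
  by (simp add: add.commute)

lemma A_fin:
  fixes phi :: "real \<Rightarrow> real"
  assumes [measurable]: "phi \<in> borel_measurable borel"
    and e: "e < -1" and a: "a > 0" and p: "p > 1"
  shows "(\<integral>\<^sup>+q. ennreal (indicator {x. a \<le> \<bar>x\<bar>} (fst q) * \<bar>fst q\<bar> powr e * (1 + \<bar>snd q + phi (fst q)\<bar>) powr (- p)) \<partial>(lborel \<Otimes>\<^sub>M lborel)) < \<infinity>"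
proof -
  let ?T = "(\<integral>\<^sup>+w. ennreal ((1 + \<bar>w\<bar>) powr (- p)) \<partial>lborel)"
  have "(\<integral>\<^sup>+q. ennreal (indicator {x. a \<le> \<bar>x\<bar>} (fst q) * \<bar>fst q\<bar> powr e * (1 + \<bar>snd q + phi (fst q)\<bar>) powr (- p)) \<partial>(lborel \<Otimes>\<^sub>M lborel))
    = (\<integral>\<^sup>+x. \<integral>\<^sup>+w. ennreal (indicator {x. a \<le> \<bar>x\<bar>} x * \<bar>x\<bar> powr e) * ennreal ((1 + \<bar>w + phi x\<bar>) powr (- p)) \<partial>lborel \<partial>lborel)"
    by (subst lborel.nn_integral_fst[symmetric]) (auto simp: ennreal_mult[symmetric] intro!: nn_integral_cong)
  also have "\<dots> = (\<integral>\<^sup>+x. ennreal (indicator {x. a \<le> \<bar>x\<bar>} x * \<bar>x\<bar> powr e) * ?T \<partial>lborel)"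
    by (simp add: nn_integral_cmult T_shift)
  also have "\<dots> = (\<integral>\<^sup>+x. ennreal (\<bar>x\<bar> powr e) * indicator {x. a \<le> \<bar>x\<bar>} x \<partial>lborel) * ?T"
    by (subst nn_integral_multc[symmetric]) (auto intro!: nn_integral_cong simp: indicator_def)
  also have "\<dots> < \<infinity>"
    using two_tail_fin[OF e a] T_fin[OF p] by (simp add: ennreal_mult_less_top)
  finally show ?thesis .
qed

lemma amgm: "(l::real) > 0 \<Longrightarrow> x * y \<le> (l * x\<^sup>2 + y\<^sup>2 / l) / 2"
proof -
  assume l: "l > 0"
  have "0 \<le> (l * x - y)\<^sup>2 / l" using l by simp
  also have "(l * x - y)\<^sup>2 / l = l * x\<^sup>2 + y\<^sup>2 / l - 2 * x * y"
    using l by (simp add: power2_eq_square field_simps)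
  finally show ?thesis by simp
qed



lemma norm_integral_le_nn: "ennreal (norm (integral\<^sup>L M f)) \<le> (\<integral>\<^sup>+x. ennreal (norm (f x)) \<partial>M)"
proof (cases "integrable M f")
  case True then show ?thesis by (rule integral_norm_bound_ennreal)
next
  case False then show ?thesis by (simp add: not_integrable_integral_eq)
qed

lemma sq_powr: "((x::real) powr c)\<^sup>2 = x powr (2 * c)"
proof -
  have "(x powr c)\<^sup>2 = x powr c * x powr c" by (rule power2_eq_square)
  also have "\<dots> = x powr (c + c)" by (rule powr_add[symmetric])
  finally show ?thesis by (simp only: mult_2)
qed

lemma aux_div1: "(y::real) > 0 \<Longrightarrow> x / y * (y * y) = x * y"
  by (simp add: field_simps)

lemma aux_div2: "(y::real) > 0 \<Longrightarrow> x > 0 \<Longrightarrow> (x * x) / (x / y) = x * y"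
  by (simp add: field_simps)

lemma jr_bound:
  fixes Jr Ar Br :: real
  assumes Ar: "0 \<le> Ar" and Br: "0 \<le> Br"
    and H: "\<And>l. l > 0 \<Longrightarrow> Jr \<le> (l * Ar + Br / l) / 2"
  shows "Jr \<le> sqrt (Ar + 1) * sqrt Br"
proof (cases "Br > 0")
  case True
  define K where "K = Ar + 1"
  have K: "K > 0" using Ar by (simp add: K_def)
  define l where "l = sqrt Br / sqrt K"
  have l: "l > 0" using True K by (simp add: l_def)
  have sK: "sqrt K > 0" and sB: "sqrt Br > 0" using K True by auto
  have KK: "K = sqrt K * sqrt K" using K by simp
  have BB: "Br = sqrt Br * sqrt Br" using True by simp
  have "Jr \<le> (l * Ar + Br / l) / 2" by (rule H[OF l])
  also have "\<dots> \<le> (l * K + Br / l) / 2"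
    using l by (intro divide_right_mono add_right_mono mult_left_mono) (auto simp: K_def)
  also have "l * K = sqrt Br * sqrt K"
  proof -
    have "l * K = sqrt Br / sqrt K * (sqrt K * sqrt K)" unfolding l_def by (subst KK) (rule refl)
    also have "\<dots> = sqrt Br * sqrt K" by (rule aux_div1[OF sK])
    finally show ?thesis .
  qed
  also have "Br / l = sqrt Br * sqrt K"
  proof -
    have "Br / l = (sqrt Br * sqrt Br) / (sqrt Br / sqrt K)" unfolding l_def by (subst BB) (rule refl)
    also have "\<dots> = sqrt Br * sqrt K" by (rule aux_div2[OF sK sB])
    finally show ?thesis .
  qed
  finally show ?thesis by (simp add: K_def mult.commute)
next
  case False
  then have B0: "Br = 0" using Br by simp
  have "Jr \<le> 0"
  proof (rule ccontr)
    assume "\<not> Jr \<le> 0"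
    then have J: "Jr > 0" by simp
    define l where "l = Jr / (Ar + 1)"
    have l: "l > 0" using J Ar by (simp add: l_def)
    have "Jr \<le> l * Ar / 2" using H[OF l] B0 by simp
    also have "\<dots> < Jr"
    proof -
      have "0 < Ar * Jr + Jr * 2" using J Ar by (intro add_nonneg_pos) auto
      then show ?thesis using J Ar unfolding l_def by (simp add: field_simps)
    qed
    finally show False by simp
  qed
  then show ?thesis using B0 by simp
qed


lemma Xw_eq: "X_weight beta gamma b u q = (1 + \<bar>snd q + phi beta gamma (fst q)\<bar>) powr (2 * b) * (cmod (FT2 u q))\<^sup>2"
  by (cases q) (simp add: X_weight_def)

lemma phi_meas[measurable]: "phi beta gamma \<in> borel_measurable borel"
  unfolding phi_def[abs_def] by measurable

lemma pointwise_cs: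
  fixes m F Wb :: real
  assumes l: "l > 0" and W: "W > 0" and m: "0 \<le> m"
  shows "m * F \<le> (l * (m\<^sup>2 * W powr (- (2 * b))) + W powr (2 * b) * F\<^sup>2 / l) / 2"
proof -
  have "m * F = (m * W powr (- b)) * (W powr b * F)"
    using W by (simp add: powr_minus field_simps)
  also have "\<dots> \<le> (l * (m * W powr (- b))\<^sup>2 + (W powr b * F)\<^sup>2 / l) / 2"
    by (rule amgm[OF l])
  also have "(m * W powr (- b))\<^sup>2 = m\<^sup>2 * W powr (- (2 * b))"
    by (simp add: power_mult_distrib sq_powr)
  also have "(W powr b * F)\<^sup>2 = W powr (2 * b) * F\<^sup>2"
    by (simp add: power_mult_distrib sq_powr)
  finally show ?thesis .
qed

theorem lemma2p11:
  fixes beta gamma eps b :: real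
  assumes "beta < 0" and "gamma > 0" and "0 < eps" and "eps \<le> 1 / 1000" and "b > 1 / 2"
  shows "\<exists>C > 0. \<forall>u :: real \<times> real \<Rightarrow> complex.
           integrable lborel u \<and> integrable lborel (FT2 u)
           \<and> integrable lborel (X_weight beta gamma b u) \<longrightarrow>
           (AE p in lborel. cmod (Dx_high (- 1/2 - 4 * eps) (a_const beta gamma) u p)
                              \<le> C * X0b_norm beta gamma b u)"
proof -
  note eps = \<open>0 < eps\<close> and bh = \<open>b > 1 / 2\<close>
  define s where "s = (- 1/2 - 4 * eps :: real)"
  define e where "e = 2 * s"
  have e: "e < -1" using eps by (simp add: e_def s_def)
  define a where "a = a_const beta gamma"
  have a: "a > 0" by (simp add: a_def a_const_def)
  define ph where "ph = phi beta gamma"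
  have [measurable]: "ph \<in> borel_measurable borel" unfolding ph_def by measurable
  define Aint where "Aint q = indicator {x. a \<le> \<bar>x\<bar>} (fst q) * \<bar>fst q\<bar> powr e * (1 + \<bar>snd q + ph (fst q)\<bar>) powr (- (2 * b))" for q :: "real \<times> real"
  have Aint_m[measurable]: "Aint \<in> borel_measurable (lborel \<Otimes>\<^sub>M lborel)"
    unfolding Aint_def[abs_def] by measurable
  have Aint_nn: "0 \<le> Aint q" for q unfolding Aint_def by simp
  have Aint_i: "integrable (lborel \<Otimes>\<^sub>M lborel) Aint"
  proof (rule integrableI_nonneg)
    show "AE q in lborel \<Otimes>\<^sub>M lborel. 0 \<le> Aint q" using Aint_nn by simp
    show "(\<integral>\<^sup>+q. ennreal (Aint q) \<partial>(lborel \<Otimes>\<^sub>M lborel)) < \<infinity>"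
      unfolding Aint_def by (rule A_fin) (use e a bh in auto)
  qed simp
  define Ar where "Ar = (\<integral>q. Aint q \<partial>(lborel \<Otimes>\<^sub>M lborel))"
  have Ar: "0 \<le> Ar" unfolding Ar_def using Aint_nn by (simp add: integral_nonneg_AE)
  define K where "K = Ar + 1"
  have K: "K > 0" using Ar by (simp add: K_def)
  show ?thesis
  proof (intro exI[of _ "sqrt K / (4 * pi\<^sup>2)"] conjI allI impI)
    show "sqrt K / (4 * pi\<^sup>2) > 0" using K by simp
    fix u :: "real \<times> real \<Rightarrow> complex"
    assume asm: "integrable lborel u \<and> integrable lborel (FT2 u) \<and> integrable lborel (X_weight beta gamma b u)"
    then have ui: "integrable lborel u" and Fi: "integrable lborel (FT2 u)"
      and Xi: "integrable lborel (X_weight beta gamma b u)" by auto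
    have Fi2: "integrable (lborel \<Otimes>\<^sub>M lborel) (FT2 u)" using Fi by (simp add: lborel_prod)
    have Xi2: "integrable (lborel \<Otimes>\<^sub>M lborel) (X_weight beta gamma b u)" using Xi by (simp add: lborel_prod)
    have F_m[measurable]: "FT2 u \<in> borel_measurable (lborel \<Otimes>\<^sub>M lborel)" using Fi2 by auto
    have Fb[measurable]: "FT2 u \<in> borel_measurable borel" using Fi by auto
    define Br where "Br = (\<integral>q. X_weight beta gamma b u q \<partial>(lborel \<Otimes>\<^sub>M lborel))"
    have Xw_nn: "0 \<le> X_weight beta gamma b u q" for q unfolding Xw_eq by simp
    have Br: "0 \<le> Br" unfolding Br_def using Xw_nn by (simp add: integral_nonneg_AE)
    have N: "X0b_norm beta gamma b u = sqrt Br"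
      unfolding X0b_norm_def Br_def lborel_prod ..
    define m where "m xi = indicator {x. a \<le> \<bar>x\<bar>} xi * \<bar>xi\<bar> powr s" for xi :: real
    have m_nn: "0 \<le> m xi" for xi unfolding m_def by simp
    have [measurable]: "m \<in> borel_measurable borel" unfolding m_def[abs_def] by measurable
    define J where "J = (\<integral>\<^sup>+q. ennreal (m (fst q) * cmod (FT2 u q)) \<partial>(lborel \<Otimes>\<^sub>M lborel))"
    have Jb: "J \<le> ennreal ((l * Ar + Br / l) / 2)" if l: "l > 0" for l
    proof -
      have pt: "m (fst q) * cmod (FT2 u q) \<le> (l * Aint q + X_weight beta gamma b u q / l) / 2" for q
      proof -
        have W: "1 + \<bar>snd q + ph (fst q)\<bar> > 0" by simp
        have "(m (fst q))\<^sup>2 = indicator {x. a \<le> \<bar>x\<bar>} (fst q) * \<bar>fst q\<bar> powr e"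
          unfolding m_def e_def by (simp add: power_mult_distrib sq_powr indicator_def)
        then have "(m (fst q))\<^sup>2 * (1 + \<bar>snd q + ph (fst q)\<bar>) powr (- (2 * b)) = Aint q"
          unfolding Aint_def by simp
        moreover have "(1 + \<bar>snd q + ph (fst q)\<bar>) powr (2 * b) * (cmod (FT2 u q))\<^sup>2 = X_weight beta gamma b u q"
          unfolding Xw_eq ph_def ..
        ultimately show ?thesis using pointwise_cs[OF l W m_nn, of "fst q" "cmod (FT2 u q)" b] by simp
      qed
      have ci: "integrable (lborel \<Otimes>\<^sub>M lborel) (\<lambda>q. (l * Aint q + X_weight beta gamma b u q / l) / 2)"
        using Aint_i Xi2 by auto
      have "J \<le> (\<integral>\<^sup>+q. ennreal ((l * Aint q + X_weight beta gamma b u q / l) / 2) \<partial>(lborel \<Otimes>\<^sub>M lborel))"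
        unfolding J_def by (intro nn_integral_mono ennreal_leI pt)
      also have "\<dots> = ennreal (\<integral>q. (l * Aint q + X_weight beta gamma b u q / l) / 2 \<partial>(lborel \<Otimes>\<^sub>M lborel))"
        using ci Aint_nn Xw_nn l by (intro nn_integral_eq_integral) auto
      also have "(\<integral>q. (l * Aint q + X_weight beta gamma b u q / l) / 2 \<partial>(lborel \<Otimes>\<^sub>M lborel)) = (l * Ar + Br / l) / 2"
        unfolding Ar_def Br_def using Aint_i Xi2 by simp
      finally show ?thesis .
    qed
    obtain Jr where Jr: "0 \<le> Jr" "J = ennreal Jr"
    proof (cases J)
      case (real r) then show ?thesis using that by blast
    next
      case top then show ?thesis using Jb[of 1] by (simp add: top_unique)
    qed
    have Jr_le: "Jr \<le> sqrt K * sqrt Br"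
      unfolding K_def
    proof (rule jr_bound[OF Ar Br])
      fix l :: real assume l: "l > 0"
      have "0 \<le> (l * Ar + Br / l) / 2" using l Ar Br by simp
      then show "Jr \<le> (l * Ar + Br / l) / 2" using Jb[OF l] Jr by simp
    qed
    have [measurable]: "FTx u \<in> borel_measurable (borel \<Otimes>\<^sub>M borel)" by (rule FTx_meas[OF ui])
    define INV where "INV xi t = complex_of_real (1 / (2 * pi)) * (\<integral>w. iexp (t * w) * FT2 u (xi, w) \<partial>lborel)" for xi t
    have good: "AE t in lborel. AE xi in lborel. FTx u (xi, t) = INV xi t"
      using FTx_inversion[OF ui Fi] unfolding INV_def .
    have Jeq: "(\<integral>\<^sup>+xi. \<integral>\<^sup>+w. ennreal (m xi * cmod (FT2 u (xi, w))) \<partial>lborel \<partial>lborel) = J"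
      unfolding J_def by (subst lborel.nn_integral_fst[symmetric]) auto
    have Dt: "cmod (Dx_high s a u (x, t)) \<le> Jr / (4 * pi\<^sup>2)"
      if g: "AE xi in lborel. FTx u (xi, t) = INV xi t" for x t
    proof -
      have I1: "(\<integral>xi. complex_of_real (m xi) * iexp (x * xi) * FTx u (xi, t) \<partial>lborel)
          = (\<integral>xi. complex_of_real (m xi) * iexp (x * xi) * INV xi t \<partial>lborel)"
      proof (rule integral_cong_AE)
        show "(\<lambda>xi. complex_of_real (m xi) * iexp (x * xi) * FTx u (xi, t)) \<in> borel_measurable lborel"
          by measurable
        show "(\<lambda>xi. complex_of_real (m xi) * iexp (x * xi) * INV xi t) \<in> borel_measurable lborel"
          unfolding INV_def by measurable
        show "AE xi in lborel. complex_of_real (m xi) * iexp (x * xi) * FTx u (xi, t) = complex_of_real (m xi) * iexp (x * xi) * INV xi t"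
          using g by eventually_elim simp
      qed
      have D: "Dx_high s a u (x, t) = complex_of_real (1 / (2 * pi)) * (\<integral>xi. complex_of_real (m xi) * iexp (x * xi) * FTx u (xi, t) \<partial>lborel)"
        by (simp add: Dx_high_def m_def)
      have INVb: "ennreal (cmod (INV xi t)) \<le> ennreal (1 / (2 * pi)) * (\<integral>\<^sup>+w. ennreal (cmod (FT2 u (xi, w))) \<partial>lborel)" for xi
      proof -
        have "ennreal (cmod (INV xi t)) = ennreal (1 / (2 * pi)) * ennreal (cmod (\<integral>w. iexp (t * w) * FT2 u (xi, w) \<partial>lborel))"
          unfolding INV_def norm_mult norm_of_real by (subst ennreal_mult[symmetric]) auto
        also have "\<dots> \<le> ennreal (1 / (2 * pi)) * (\<integral>\<^sup>+w. ennreal (cmod (iexp (t * w) * FT2 u (xi, w))) \<partial>lborel)"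
          by (intro mult_left_mono norm_integral_le_nn) auto
        also have "\<dots> = ennreal (1 / (2 * pi)) * (\<integral>\<^sup>+w. ennreal (cmod (FT2 u (xi, w))) \<partial>lborel)"
          by (simp add: norm_mult)
        finally show ?thesis .
      qed
      have "ennreal (cmod (Dx_high s a u (x, t))) = ennreal (1 / (2 * pi)) * ennreal (cmod (\<integral>xi. complex_of_real (m xi) * iexp (x * xi) * INV xi t \<partial>lborel))"
        unfolding D I1 norm_mult norm_of_real by (subst ennreal_mult[symmetric]) auto
      also have "\<dots> \<le> ennreal (1 / (2 * pi)) * (\<integral>\<^sup>+xi. ennreal (cmod (complex_of_real (m xi) * iexp (x * xi) * INV xi t)) \<partial>lborel)"
        by (intro mult_left_mono norm_integral_le_nn) auto
      also have "(\<integral>\<^sup>+xi. ennreal (cmod (complex_of_real (m xi) * iexp (x * xi) * INV xi t)) \<partial>lborel)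
          = (\<integral>\<^sup>+xi. ennreal (m xi) * ennreal (cmod (INV xi t)) \<partial>lborel)"
        by (intro nn_integral_cong) (simp add: norm_mult ennreal_mult abs_of_nonneg m_nn)
      also have "\<dots> \<le> (\<integral>\<^sup>+xi. ennreal (m xi) * (ennreal (1 / (2 * pi)) * (\<integral>\<^sup>+w. ennreal (cmod (FT2 u (xi, w))) \<partial>lborel)) \<partial>lborel)"
        by (intro nn_integral_mono mult_left_mono INVb) auto
      also have "\<dots> = (\<integral>\<^sup>+xi. ennreal (1 / (2 * pi)) * (\<integral>\<^sup>+w. ennreal (m xi * cmod (FT2 u (xi, w))) \<partial>lborel) \<partial>lborel)"
      proof (intro nn_integral_cong)
        fix xi
        have "ennreal (m xi) * (\<integral>\<^sup>+w. ennreal (cmod (FT2 u (xi, w))) \<partial>lborel) = (\<integral>\<^sup>+w. ennreal (m xi) * ennreal (cmod (FT2 u (xi, w))) \<partial>lborel)"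
          by (rule nn_integral_cmult[symmetric]) measurable
        moreover have "(\<integral>\<^sup>+w. ennreal (m xi * cmod (FT2 u (xi, w))) \<partial>lborel) = (\<integral>\<^sup>+w. ennreal (m xi) * ennreal (cmod (FT2 u (xi, w))) \<partial>lborel)"
          by (intro nn_integral_cong) (simp add: ennreal_mult m_nn)
        ultimately show "ennreal (m xi) * (ennreal (1 / (2 * pi)) * (\<integral>\<^sup>+w. ennreal (cmod (FT2 u (xi, w))) \<partial>lborel))
            = ennreal (1 / (2 * pi)) * (\<integral>\<^sup>+w. ennreal (m xi * cmod (FT2 u (xi, w))) \<partial>lborel)"
          by (metis mult.left_commute)
      qed
      also have "\<dots> = ennreal (1 / (2 * pi)) * J"
        unfolding Jeq[symmetric] by (rule nn_integral_cmult) measurable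
      finally have "ennreal (cmod (Dx_high s a u (x, t))) \<le> ennreal (1 / (2 * pi)) * (ennreal (1 / (2 * pi)) * ennreal Jr)"
        using Jr(2) by (simp add: mult_left_mono)
      also have "\<dots> = ennreal (Jr / (4 * pi\<^sup>2))"
        using Jr(1) by (simp add: ennreal_mult[symmetric] power2_eq_square)
      finally show ?thesis using Jr(1) by (simp add: ennreal_le_iff)
    qed
    have CN: "Jr / (4 * pi\<^sup>2) \<le> sqrt K / (4 * pi\<^sup>2) * X0b_norm beta gamma b u"
      unfolding N using Jr_le by (simp add: divide_right_mono)
    from good obtain N0 where N0: "{t \<in> space lborel. \<not> (AE xi in lborel. FTx u (xi, t) = INV xi t)} \<subseteq> N0" "N0 \<in> null_sets lborel"
    proof -
      from good obtain N where "{t \<in> space lborel. \<not> (AE xi in lborel. FTx u (xi, t) = INV xi t)} \<subseteq> N"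
        "emeasure lborel N = 0" "N \<in> sets lborel" by (rule AE_E)
      then show ?thesis using that by (auto simp: null_sets_def)
    qed
    have "AE p in lborel \<Otimes>\<^sub>M lborel. cmod (Dx_high s a u p) \<le> sqrt K / (4 * pi\<^sup>2) * X0b_norm beta gamma b u"
    proof (rule AE_I'[OF lborel.times_in_null_sets2[OF _ N0(2), of UNIV]])
      show "UNIV \<in> sets lborel" by simp
      show "{p \<in> space (lborel \<Otimes>\<^sub>M lborel). \<not> cmod (Dx_high s a u p) \<le> sqrt K / (4 * pi\<^sup>2) * X0b_norm beta gamma b u} \<subseteq> UNIV \<times> N0"
      proof safe
        fix x t show "x \<in> UNIV" by simp
      next
        fix x t
        assume nb: "\<not> cmod (Dx_high s a u (x, t)) \<le> sqrt K / (4 * pi\<^sup>2) * X0b_norm beta gamma b u"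
        show "t \<in> N0"
        proof (rule ccontr)
          assume "t \<notin> N0"
          then have "AE xi in lborel. FTx u (xi, t) = INV xi t" using N0(1) by auto
          from Dt[OF this, of x] CN nb show False by simp
        qed
      qed
    qed
    then show "AE p in lborel. cmod (Dx_high (- 1/2 - 4 * eps) (a_const beta gamma) u p) \<le> sqrt K / (4 * pi\<^sup>2) * X0b_norm beta gamma b u"
      unfolding s_def a_def lborel_prod .
  qed
qed

end
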